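(* Let $k$ be a field, $d\in\mathbb{N}$, $X=Q_d\times\mathcal{L}\mathbb{G}_m$ and $Y=\mathcal{L}^{\le d}\mathbb{A}^1$, and let $\beta_d:X\to Y$ be $\beta_d(q,u)=uq$. Then $\beta_d$ is surjective on $k$-points, and for every $x\in X(k)$ with image $y=\beta_d(x)\in Y(k)$ the induced morphism of formal completions $\hat X_x\to\hat Y_y$ is formally smooth.
   Context: $\mathcal{L}\mathbb{A}^1=\operatorname{Spec}k[x_0,x_1,\ldots]$ is the arc space of the affine line, whose $R$-points are formal series $x_0+x_1t+\cdots\in R[[t]]$. $\mathcal{L}^{\le d}\mathbb{A}^1$ is the open subscheme of $\mathcal{L}\mathbb{A}^1$ which is the preimage of the complement of $0$ under the projection to $\operatorname{Spec}k[x_0,\ldots,x_d]$; its $k$-points are the series of $t$-adic valuation $\le d$. $Q_d$ is the closed affine subspace of $\mathcal{L}\mathbb{A}^1$ defined by $x_d=1$, $x_{d+1}=x_{d+2}=\cdots=0$, i.e. monic polynomials of degree $d$. $\mathcal{L}\mathbb{G}_m$ represents $R\mapsto R[[t]]^\times$. Formal smoothness of $\hat X_x\to\hat Y_y$ means the infinitesimal lifting property with respect to surjections of Artinian local $k$-algebras. *)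

theory Defs
  imports "HOL-Computational_Algebra.Formal_Power_Series"
begin

definition is_ideal :: "'a::comm_ring_1 set \<Rightarrow> bool" where
  "is_ideal I \<longleftrightarrow> 0 \<in> I \<and> (\<forall>x\<in>I. \<forall>y\<in>I. x + y \<in> I) \<and> (\<forall>a. \<forall>x\<in>I. a * x \<in> I)"

definition is_max_ideal :: "'a::comm_ring_1 set \<Rightarrow> bool" where
  "is_max_ideal m \<longleftrightarrow> is_ideal m \<and> m \<noteq> UNIV \<and>
     (\<forall>J. is_ideal J \<and> m \<subseteq> J \<longrightarrow> J = m \<or> J = UNIV)"

definition is_local_ring :: "'a::comm_ring_1 itself \<Rightarrow> bool" where
  "is_local_ring _ \<longleftrightarrow> (\<exists>!m::'a set. is_max_ideal m)"

definition max_ideal :: "'a::comm_ring_1 set" where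
  "max_ideal = (THE m. is_max_ideal m)"

definition is_artinian :: "'a::comm_ring_1 itself \<Rightarrow> bool" where
  "is_artinian _ \<longleftrightarrow> (\<forall>I :: nat \<Rightarrow> 'a set.
      (\<forall>n. is_ideal (I n) \<and> I (Suc n) \<subseteq> I n) \<longrightarrow> (\<exists>N. \<forall>n\<ge>N. I n = I N))"

text \<open>A k-algebra structure on A is a unital ring homomorphism k -> A.\<close>
definition ring_hom_fun :: "('a::comm_ring_1 \<Rightarrow> 'b::comm_ring_1) \<Rightarrow> bool" where
  "ring_hom_fun f \<longleftrightarrow> f 1 = 1 \<and> (\<forall>x y. f (x + y) = f x + f y) \<and> (\<forall>x y. f (x * y) = f x * f y)"

text \<open>Artinian local k-algebra with residue field k (objects of Art_k).\<close>
definition art_local_k_alg :: "('k::field \<Rightarrow> 'a::comm_ring_1) \<Rightarrow> bool" where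
  "art_local_k_alg \<phi> \<longleftrightarrow> ring_hom_fun \<phi> \<and> is_local_ring TYPE('a) \<and> is_artinian TYPE('a) \<and>
     (\<forall>a::'a. \<exists>c. a - \<phi> c \<in> max_ideal)"

definition k_alg_hom :: "('k::field \<Rightarrow> 'a::comm_ring_1) \<Rightarrow> ('k \<Rightarrow> 'b::comm_ring_1) \<Rightarrow> ('a \<Rightarrow> 'b) \<Rightarrow> bool" where
  "k_alg_hom \<phi>A \<phi>B \<pi> \<longleftrightarrow> ring_hom_fun \<pi> \<and> (\<forall>c. \<pi> (\<phi>A c) = \<phi>B c)"

definition fps_map :: "('a \<Rightarrow> 'b) \<Rightarrow> 'a fps \<Rightarrow> 'b fps" where
  "fps_map h f = Abs_fps (\<lambda>n. h (fps_nth f n))"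

definition Qd_pt :: "nat \<Rightarrow> 'a::comm_ring_1 fps \<Rightarrow> bool" where
  "Qd_pt d q \<longleftrightarrow> fps_nth q d = 1 \<and> (\<forall>n>d. fps_nth q n = 0)"

definition LGm_pt :: "'a::comm_ring_1 fps \<Rightarrow> bool" where
  "LGm_pt u \<longleftrightarrow> (\<exists>v. u * v = 1)"

definition X_pt :: "nat \<Rightarrow> 'a::comm_ring_1 fps \<times> 'a fps \<Rightarrow> bool" where
  "X_pt d x \<longleftrightarrow> Qd_pt d (fst x) \<and> LGm_pt (snd x)"

text \<open>R-points of L^{<=d} A^1: series whose coefficients x_0..x_d generate the unit ideal
  (i.e. Spec R -> A^{d+1} lands in the complement of the origin).\<close>
definition Y_pt :: "nat \<Rightarrow> 'a::comm_ring_1 fps \<Rightarrow> bool" where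
  "Y_pt d f \<longleftrightarrow> (\<exists>c. (\<Sum>i\<le>d. c i * fps_nth f i) = 1)"

definition beta :: "'a::comm_ring_1 fps \<times> 'a fps \<Rightarrow> 'a fps" where
  "beta x = snd x * fst x"

definition reduces_to :: "('k::field \<Rightarrow> 'a::comm_ring_1) \<Rightarrow> 'a fps \<Rightarrow> 'k fps \<Rightarrow> bool" where
  "reduces_to \<phi> f g \<longleftrightarrow> (\<forall>n. fps_nth f n - \<phi> (fps_nth g n) \<in> max_ideal)"

definition hatX_pt :: "('k::field \<Rightarrow> 'a::comm_ring_1) \<Rightarrow> nat \<Rightarrow> 'k fps \<times> 'k fps \<Rightarrow> 'a fps \<times> 'a fps \<Rightarrow> bool" where
  "hatX_pt \<phi> d x \<xi> \<longleftrightarrow> X_pt d \<xi> \<and> reduces_to \<phi> (fst \<xi>) (fst x) \<and> reduces_to \<phi> (snd \<xi>) (snd x)"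

definition hatY_pt :: "('k::field \<Rightarrow> 'a::comm_ring_1) \<Rightarrow> nat \<Rightarrow> 'k fps \<Rightarrow> 'a fps \<Rightarrow> bool" where
  "hatY_pt \<phi> d y \<eta> \<longleftrightarrow> Y_pt d \<eta> \<and> reduces_to \<phi> \<eta> y"

text \<open>Infinitesimal lifting property of hat X_x -> hat Y_y with respect to a surjection
  pi : A -> B in Art_k.\<close>
definition beta_lifts :: "nat \<Rightarrow> 'k::field fps \<times> 'k fps \<Rightarrow> ('k \<Rightarrow> 'a::comm_ring_1) \<Rightarrow> ('k \<Rightarrow> 'b::comm_ring_1) \<Rightarrow> ('a \<Rightarrow> 'b) \<Rightarrow> bool" where
  "beta_lifts d x \<phi>A \<phi>B \<pi> \<longleftrightarrow>
     (\<forall>\<xi>B \<eta>. hatX_pt \<phi>B d x \<xi>B \<and> hatY_pt \<phi>A d (beta x) \<eta> \<and> beta \<xi>B = fps_map \<pi> \<eta> \<longrightarrow>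
        (\<exists>\<xi>A. hatX_pt \<phi>A d x \<xi>A \<and> fps_map \<pi> (fst \<xi>A) = fst \<xi>B \<and> fps_map \<pi> (snd \<xi>A) = snd \<xi>B
               \<and> beta \<xi>A = \<eta>))"

end

theory Submission
  imports Defs
begin


lemma ideal_UNIV_if_one: "is_ideal I \<Longrightarrow> 1 \<in> I \<Longrightarrow> I = UNIV"
  unfolding is_ideal_def by (metis UNIV_eq_I mult.right_neutral)

lemma max_ideal_is_max:
  assumes "is_local_ring TYPE('a::comm_ring_1)"
  shows "is_max_ideal (max_ideal :: 'a set)"
  using assms unfolding is_local_ring_def max_ideal_def by (rule theI')

lemma max_ideal_unique:
  assumes "is_local_ring TYPE('a::comm_ring_1)" "is_max_ideal (M :: 'a set)"
  shows "M = max_ideal"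
  using assms max_ideal_is_max[OF assms(1)] unfolding is_local_ring_def by blast

lemma ideal_in_max:
  fixes I :: "'a::comm_ring_1 set"
  assumes loc: "is_local_ring TYPE('a)" and I: "is_ideal I" "I \<noteq> UNIV"
  shows "I \<subseteq> max_ideal"
proof -
  define AA where "AA = {J :: 'a set. is_ideal J \<and> I \<subseteq> J \<and> 1 \<notin> J}"
  have "1 \<notin> I" using I ideal_UNIV_if_one by blast
  hence ne: "AA \<noteq> {}" using I unfolding AA_def by blast
  have "\<exists>M\<in>AA. \<forall>X\<in>AA. M \<subseteq> X \<longrightarrow> X = M"
  proof (rule subset_Zorn_nonempty[OF ne])
    fix C assume C: "C \<noteq> {}" "subset.chain AA C"
    hence CA: "C \<subseteq> AA" and ch: "\<And>X Y. X \<in> C \<Longrightarrow> Y \<in> C \<Longrightarrow> X \<subseteq> Y \<or> Y \<subseteq> X"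
      unfolding subset.chain_def by auto
    have "is_ideal (\<Union>C)"
      unfolding is_ideal_def
    proof (intro conjI ballI allI)
      show "0 \<in> \<Union>C" using C CA unfolding AA_def is_ideal_def by blast
    next
      fix x y assume "x \<in> \<Union>C" "y \<in> \<Union>C"
      then obtain X Y where XY: "X \<in> C" "Y \<in> C" "x \<in> X" "y \<in> Y" by blast
      show "x + y \<in> \<Union>C"
        using ch[OF XY(1,2)] XY CA unfolding AA_def is_ideal_def by blast
    next
      fix a x assume "x \<in> \<Union>C"
      then show "a * x \<in> \<Union>C" using CA unfolding AA_def is_ideal_def by blast
    qed
    moreover have "I \<subseteq> \<Union>C" using C CA unfolding AA_def by blast
    moreover have "1 \<notin> \<Union>C" using CA unfolding AA_def by blast
    ultimately show "\<Union>C \<in> AA" unfolding AA_def by blast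
  qed
  then obtain M where M: "M \<in> AA" "\<And>X. X \<in> AA \<Longrightarrow> M \<subseteq> X \<Longrightarrow> X = M" by blast
  have "is_max_ideal M"
    unfolding is_max_ideal_def
  proof (intro conjI allI impI)
    show "is_ideal M" using M unfolding AA_def by blast
    show "M \<noteq> UNIV" using M unfolding AA_def by blast
    fix J assume J: "is_ideal J \<and> M \<subseteq> J"
    show "J = M \<or> J = UNIV"
    proof (cases "1 \<in> J")
      case True then show ?thesis using J ideal_UNIV_if_one by blast
    next
      case False
      then have "J \<in> AA" using J M(1) unfolding AA_def by blast
      then show ?thesis using M(2) J by blast
    qed
  qed
  hence "M = max_ideal" by (rule max_ideal_unique[OF loc])
  thus ?thesis using M(1) unfolding AA_def by blast
qed

lemma nonunit_in_max:
  fixes a :: "'a::comm_ring_1"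
  assumes loc: "is_local_ring TYPE('a)" and nu: "\<And>b. a * b \<noteq> 1"
  shows "a \<in> max_ideal"
proof -
  define I where "I = {c * a | c. True}"
  have "is_ideal I" unfolding is_ideal_def I_def
  proof (intro conjI ballI allI)
    show "0 \<in> {c * a |c. True}" by (intro CollectI exI[of _ 0]) simp
  next
    fix x y assume "x \<in> {c * a |c. True}" "y \<in> {c * a |c. True}"
    then obtain c1 c2 where "x = c1 * a" "y = c2 * a" by blast
    then show "x + y \<in> {c * a |c. True}" by (intro CollectI exI[of _ "c1 + c2"]) (simp add: distrib_right)
  next
    fix b x assume "x \<in> {c * a |c. True}"
    then obtain c1 where "x = c1 * a" by blast
    then show "b * x \<in> {c * a |c. True}" by (intro CollectI exI[of _ "b * c1"]) (simp add: mult.assoc)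
  qed
  moreover have "I \<noteq> UNIV"
  proof
    assume "I = UNIV"
    then have "1 \<in> I" by simp
    then obtain c where "1 = c * a" unfolding I_def by blast
    then show False using nu[of c] by (simp add: mult.commute)
  qed
  ultimately have "I \<subseteq> max_ideal" by (rule ideal_in_max[OF loc])
  moreover have "a \<in> I" unfolding I_def by (intro CollectI exI[of _ 1]) simp
  ultimately show ?thesis by blast
qed

lemma max_ideal_ideal:
  assumes loc: "is_local_ring TYPE('a::comm_ring_1)"
  shows "is_ideal (max_ideal :: 'a set)"
  using max_ideal_is_max[OF loc] unfolding is_max_ideal_def by (elim conjE)

lemma mi_zero: "is_local_ring TYPE('a::comm_ring_1) \<Longrightarrow> (0::'a) \<in> max_ideal"
  using max_ideal_ideal unfolding is_ideal_def by blast
lemma mi_add: "is_local_ring TYPE('a::comm_ring_1) \<Longrightarrow> (x::'a) \<in> max_ideal \<Longrightarrow> y \<in> max_ideal \<Longrightarrow> x + y \<in> max_ideal"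
  using max_ideal_ideal unfolding is_ideal_def by blast
lemma mi_mult: "is_local_ring TYPE('a::comm_ring_1) \<Longrightarrow> (x::'a) \<in> max_ideal \<Longrightarrow> c * x \<in> max_ideal"
  using max_ideal_ideal unfolding is_ideal_def by blast
lemma mi_one: "is_local_ring TYPE('a::comm_ring_1) \<Longrightarrow> (1::'a) \<notin> max_ideal"
proof
  assume loc: "is_local_ring TYPE('a::comm_ring_1)" and h: "(1::'a) \<in> max_ideal"
  have "(max_ideal :: 'a set) = UNIV" by (rule ideal_UNIV_if_one[OF max_ideal_ideal[OF loc] h])
  thus False using max_ideal_is_max[OF loc] unfolding is_max_ideal_def by (elim conjE) simp
qed

lemma unit_not_in_max:
  fixes a :: "'a::comm_ring_1"
  assumes loc: "is_local_ring TYPE('a)" and u: "a * b = 1" and m: "a \<in> max_ideal"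
  shows False
proof -
  have "b * a \<in> max_ideal" by (rule mi_mult[OF loc m])
  hence "1 \<in> (max_ideal :: 'a set)" using u by (simp add: mult.commute)
  thus False using mi_one[OF loc] by blast
qed

lemma not_in_max_unit:
  fixes a :: "'a::comm_ring_1"
  assumes loc: "is_local_ring TYPE('a)" and "a \<notin> max_ideal"
  shows "\<exists>b. a * b = 1"
  using nonunit_in_max[OF loc] assms by blast

lemma max_nilpotent:
  fixes a :: "'a::comm_ring_1"
  assumes loc: "is_local_ring TYPE('a)" and art: "is_artinian TYPE('a)" and m: "a \<in> max_ideal"
  shows "\<exists>n. a ^ n = 0"
proof -
  define I where "I = (\<lambda>n. {c * a ^ n | c. True})"
  have "\<forall>n. is_ideal (I n) \<and> I (Suc n) \<subseteq> I n"
  proof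
    fix n
    have "is_ideal (I n)" unfolding is_ideal_def I_def
    proof (intro conjI ballI allI)
      show "0 \<in> {c * a ^ n |c. True}" by (intro CollectI exI[of _ 0]) simp
    next
      fix x y assume "x \<in> {c * a ^ n |c. True}" "y \<in> {c * a ^ n |c. True}"
      then obtain c1 c2 where "x = c1 * a ^ n" "y = c2 * a ^ n" by blast
      then show "x + y \<in> {c * a ^ n |c. True}" by (intro CollectI exI[of _ "c1 + c2"]) (simp add: distrib_right)
    next
      fix b x assume "x \<in> {c * a ^ n |c. True}"
      then obtain c1 where "x = c1 * a ^ n" by blast
      then show "b * x \<in> {c * a ^ n |c. True}" by (intro CollectI exI[of _ "b * c1"]) (simp add: mult.assoc)
    qed
    moreover have "I (Suc n) \<subseteq> I n"
    proof
      fix x assume "x \<in> I (Suc n)"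
      then obtain c where "x = c * a ^ Suc n" unfolding I_def by blast
      then show "x \<in> I n" unfolding I_def
        by (intro CollectI exI[of _ "c * a"]) (simp add: mult.assoc)
    qed
    ultimately show "is_ideal (I n) \<and> I (Suc n) \<subseteq> I n" by blast
  qed
  then obtain N where N: "\<forall>n\<ge>N. I n = I N" using art unfolding is_artinian_def by blast
  have "a ^ N \<in> I N" unfolding I_def by (intro CollectI exI[of _ 1]) simp
  moreover have "I (Suc N) = I N" using N[rule_format, of "Suc N"] by linarith
  ultimately have "a ^ N \<in> I (Suc N)" by simp
  then obtain c where c: "a ^ N = c * a ^ Suc N" unfolding I_def by blast
  have "a ^ N * (1 - c * a) = a ^ N - c * a ^ Suc N" by (simp add: algebra_simps)
  also have "\<dots> = 0" by (subst c) simp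
  finally have z: "a ^ N * (1 - c * a) = 0" .
  have "1 - c * a \<notin> max_ideal"
  proof
    assume h: "1 - c * a \<in> max_ideal"
    have "c * a \<in> max_ideal" by (rule mi_mult[OF loc m])
    hence "(1 - c * a) + c * a \<in> max_ideal" using h mi_add[OF loc] by blast
    thus False using mi_one[OF loc] by simp
  qed
  then obtain b where b: "(1 - c * a) * b = 1" using not_in_max_unit[OF loc] by blast
  have "a ^ N = a ^ N * ((1 - c * a) * b)" using b by simp
  also have "\<dots> = 0" using z by (simp add: mult.assoc[symmetric])
  finally show ?thesis by blast
qed



lemma ideal_sum:
  assumes J: "is_ideal J" and fin: "finite A"
  shows "(\<forall>i\<in>A. x i \<in> J) \<Longrightarrow> sum x A \<in> J"
  using fin
proof (induction A rule: finite_induct)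
  case empty then show ?case using J unfolding is_ideal_def by simp
next
  case (insert a A) then show ?case using J unfolding is_ideal_def by simp
qed

lemma ideal_mult: "is_ideal J \<Longrightarrow> x \<in> J \<Longrightarrow> c * x \<in> J"
  unfolding is_ideal_def by blast

lemma ideal_neg: "is_ideal J \<Longrightarrow> (x::'a::comm_ring_1) \<in> J \<Longrightarrow> - x \<in> J"
  using ideal_mult[of J x "-1"] by simp

lemma ideal_add: "is_ideal J \<Longrightarrow> x \<in> J \<Longrightarrow> y \<in> J \<Longrightarrow> x + y \<in> J"
  unfolding is_ideal_def by blast

lemma ideal_fps_mult:
  fixes F G :: "'a::comm_ring_1 fps"
  assumes J: "is_ideal J" and F: "\<forall>n. fps_nth F n \<in> J"
  shows "fps_nth (G * F) n \<in> J"
  unfolding fps_mult_nth by (rule ideal_sum[OF J]) (auto intro: ideal_mult[OF J] F[rule_format])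

lemma fps_unit:
  fixes f :: "'a::comm_ring_1 fps"
  assumes "fps_nth f 0 * y = 1"
  shows "\<exists>g. f * g = 1"
  using fps_right_inverse[OF assms] by blast

fun Pw :: "(nat \<Rightarrow> 'a::comm_ring_1) \<Rightarrow> nat \<Rightarrow> nat \<Rightarrow> 'a set" where
  "Pw a v 0 = UNIV"
| "Pw a v (Suc K) = {x. \<exists>y. (\<forall>i<v. y i \<in> Pw a v K) \<and> x = (\<Sum>i<v. a i * y i)}"

lemma Pw_ideal: "is_ideal (Pw a v K)"
proof (induction K)
  case 0 then show ?case unfolding is_ideal_def by simp
next
  case (Suc K)
  show ?case unfolding is_ideal_def
  proof (intro conjI ballI allI)
    show "0 \<in> Pw a v (Suc K)"
      using Suc unfolding is_ideal_def by (auto intro!: exI[of _ "\<lambda>_. 0"])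
  next
    fix x y assume "x \<in> Pw a v (Suc K)" "y \<in> Pw a v (Suc K)"
    then obtain y1 y2 where h: "\<forall>i<v. y1 i \<in> Pw a v K" "x = (\<Sum>i<v. a i * y1 i)"
       "\<forall>i<v. y2 i \<in> Pw a v K" "y = (\<Sum>i<v. a i * y2 i)" by auto
    have "x + y = (\<Sum>i<v. a i * (y1 i + y2 i))"
      using h by (simp add: sum.distrib distrib_left)
    moreover have "\<forall>i<v. y1 i + y2 i \<in> Pw a v K" using h Suc ideal_add by blast
    ultimately show "x + y \<in> Pw a v (Suc K)" by auto
  next
    fix c x assume "x \<in> Pw a v (Suc K)"
    then obtain y1 where h: "\<forall>i<v. y1 i \<in> Pw a v K" "x = (\<Sum>i<v. a i * y1 i)" by auto
    have "c * x = (\<Sum>i<v. a i * (c * y1 i))"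
      using h by (simp add: sum_distrib_left mult.left_commute)
    moreover have "\<forall>i<v. c * y1 i \<in> Pw a v K" using h Suc ideal_mult by blast
    ultimately show "c * x \<in> Pw a v (Suc K)" by auto
  qed
qed

inductive_set WS :: "(nat \<Rightarrow> 'a::comm_ring_1) \<Rightarrow> nat \<Rightarrow> nat \<Rightarrow> 'a set" for a v K where
  WS0: "0 \<in> WS a v K"
| WSw: "(\<forall>j<K. f j < v) \<Longrightarrow> c * (\<Prod>j<K. a (f j)) \<in> WS a v K"
| WSadd: "x \<in> WS a v K \<Longrightarrow> y \<in> WS a v K \<Longrightarrow> x + y \<in> WS a v K"

lemma WS_step:
  assumes "x \<in> WS a v K" "i < v"
  shows "a i * x \<in> WS a v (Suc K)"
  using assms(1)
proof (induction rule: WS.induct)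
  case WS0 then show ?case by (simp add: WS.WS0)
next
  case (WSw f c)
  define g where "g = f(K := i)"
  have g: "\<forall>j<Suc K. g j < v" using WSw assms(2) unfolding g_def by auto
  have "(\<Prod>j<Suc K. a (g j)) = a i * (\<Prod>j<K. a (f j))"
    by (simp add: g_def mult.commute)
  hence "a i * (c * (\<Prod>j<K. a (f j))) = c * (\<Prod>j<Suc K. a (g j))"
    by (simp add: mult.left_commute)
  then show ?case using WS.WSw[OF g, of c] by simp
next
  case (WSadd x y) then show ?case by (simp add: distrib_left WS.WSadd)
qed

lemma WS_sum:
  fixes m :: nat
  shows "(\<forall>i<m. z i \<in> WS a v K) \<Longrightarrow> (\<Sum>i<m. z i) \<in> WS a v K"
proof (induction m)
  case 0 then show ?case by (simp add: WS.WS0)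
next
  case (Suc m) then show ?case by (simp add: WS.WSadd)
qed

lemma Pw_WS: "Pw a v K \<subseteq> WS a v K"
proof (induction K)
  case 0
  show ?case
  proof
    fix x :: 'a
    have h: "\<forall>j<(0::nat). (\<lambda>_. 0::nat) j < v" by simp
    from WS.WSw[OF h, of x a] show "x \<in> WS a v 0" by simp
  qed
next
  case (Suc K)
  show ?case
  proof
    fix x assume "x \<in> Pw a v (Suc K)"
    then obtain y where h: "\<forall>i<v. y i \<in> Pw a v K" "x = (\<Sum>i<v. a i * y i)" by auto
    have "\<forall>i<v. a i * y i \<in> WS a v (Suc K)" using h(1) Suc WS_step by blast
    then show "x \<in> WS a v (Suc K)" unfolding h(2) by (rule WS_sum)
  qed
qed

lemma word_zero:
  fixes a :: "nat \<Rightarrow> 'a::comm_ring_1"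
  assumes f: "\<forall>j<K. f j < v" and K: "K > v * n" and nil: "\<forall>i<v. a i ^ n = 0"
  shows "(\<Prod>j<K. a (f j)) = 0"
proof -
  define F where "F = (\<lambda>i. {j. j < K \<and> f j = i})"
  have "{..<K} \<subseteq> (\<Union>i\<in>{..<v}. F i)" using f unfolding F_def by auto
  hence "card {..<K} \<le> card (\<Union>i\<in>{..<v}. F i)"
    by (intro card_mono) (auto simp: F_def)
  also have "\<dots> \<le> (\<Sum>i<v. card (F i))" by (rule card_UN_le) simp
  finally have le: "K \<le> (\<Sum>i<v. card (F i))" by simp
  have "\<exists>i<v. card (F i) \<ge> n"
  proof (rule ccontr)
    assume "\<not> ?thesis"
    hence "\<forall>i\<in>{..<v}. card (F i) \<le> n" by auto
    hence "(\<Sum>i<v. card (F i)) \<le> v * n" using sum_bounded_above[of "{..<v}" "\<lambda>i. card (F i)" n] by simp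
    thus False using le K by linarith
  qed
  then obtain i where i: "i < v" "card (F i) \<ge> n" by blast
  have sub: "F i \<subseteq> {..<K}" unfolding F_def by auto
  have "(\<Prod>j<K. a (f j)) = (\<Prod>j\<in>{..<K} - F i. a (f j)) * (\<Prod>j\<in>F i. a (f j))"
    by (rule prod.subset_diff[OF sub]) simp
  also have "(\<Prod>j\<in>F i. a (f j)) = (\<Prod>j\<in>F i. a i)"
    by (rule prod.cong) (auto simp: F_def)
  also have "\<dots> = a i ^ card (F i)" by simp
  also have "\<dots> = a i ^ n * a i ^ (card (F i) - n)" using i(2) by (simp add: power_add[symmetric])
  also have "\<dots> = 0" using nil i(1) by simp
  finally show ?thesis by simp
qed

lemma WS_zero:
  assumes "x \<in> WS a v K" "K > v * n" "\<forall>i<v. a i ^ n = 0"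
  shows "x = 0"
  using assms(1)
proof induction
  case (WSw f c) then show ?case using word_zero[OF _ assms(2) assms(3)] by simp
qed auto



lemma weier_div:
  fixes \<eta> :: "'a::comm_ring_1 fps"
  assumes unit: "fps_nth \<eta> v * e = 1"
    and nil: "\<forall>i<v. fps_nth \<eta> i ^ n = 0"
    and J: "is_ideal J" and r: "\<forall>m. r m \<in> J"
  shows "\<exists>\<delta>. (\<forall>m. fps_nth \<delta> m \<in> J) \<and> (\<forall>m. fps_nth (\<delta> * \<eta>) (m + v) = r m)"
proof -
  define a where "a = (\<lambda>i. fps_nth \<eta> i)"
  define P where "P = Abs_fps (\<lambda>i. if i < v then fps_nth \<eta> i else 0)"
  define E where "E = fps_shift v \<eta>"
  have eta: "\<eta> = P + E * fps_X ^ v"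
    by (rule fps_ext) (simp add: P_def E_def fps_X_power_mult_right_nth)
  obtain Ei where Ei: "E * Ei = 1" using fps_unit[of E e] unit by (auto simp: E_def)
  define Rp where "Rp = Abs_fps r"
  define c where "c = Ei * Rp"
  define N where "N = (\<lambda>F. - (Ei * fps_shift v (P * F)))"
  have N_add: "N (F + G) = N F + N G" for F G by (simp add: N_def distrib_left fps_shift_add)
  have N_0: "N 0 = 0" by (simp add: N_def)
  have N_sum: "N (\<Sum>k<K. G k) = (\<Sum>k<K. N (G k))" for K :: nat and G
    by (induction K) (simp_all add: N_0 N_add)
  have shift_coeff: "fps_nth (fps_shift v (P * F)) m = (\<Sum>i<v. a i * fps_nth F (m + v - i))" for F m
  proof -
    have "fps_nth (fps_shift v (P * F)) m = (\<Sum>i=0..m+v. fps_nth P i * fps_nth F (m + v - i))"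
      by (simp add: fps_mult_nth)
    also have "\<dots> = (\<Sum>i\<in>{..<v}. fps_nth P i * fps_nth F (m + v - i))"
      by (rule sum.mono_neutral_right) (auto simp: P_def)
    also have "\<dots> = (\<Sum>i<v. a i * fps_nth F (m + v - i))"
      by (rule sum.cong) (auto simp: P_def a_def)
    finally show ?thesis .
  qed
  have N_Pw: "\<forall>m. fps_nth (N F) m \<in> Pw a v (Suc K)" if F: "\<forall>m. fps_nth F m \<in> Pw a v K" for F K
  proof
    fix m
    have "\<forall>m. fps_nth (fps_shift v (P * F)) m \<in> Pw a v (Suc K)"
    proof
      fix m
      show "fps_nth (fps_shift v (P * F)) m \<in> Pw a v (Suc K)"
        unfolding shift_coeff using F by (auto intro!: exI[of _ "\<lambda>i. fps_nth F (m + v - i)"])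
    qed
    then show "fps_nth (N F) m \<in> Pw a v (Suc K)"
      unfolding N_def fps_neg_nth by (intro ideal_neg[OF Pw_ideal] ideal_fps_mult[OF Pw_ideal])
  qed
  have Nk: "\<forall>m. fps_nth ((N ^^ k) c) m \<in> Pw a v k" for k
  proof (induction k)
    case 0 then show ?case by simp
  next
    case (Suc k) then show ?case using N_Pw by simp
  qed
  define K where "K = Suc (v * n)"
  have NK: "(N ^^ K) c = 0"
  proof (rule fps_ext)
    fix m
    have "fps_nth ((N ^^ K) c) m \<in> WS a v K" using Nk Pw_WS by blast
    moreover have "\<forall>i<v. a i ^ n = 0" using nil by (simp add: a_def)
    ultimately show "fps_nth ((N ^^ K) c) m = fps_nth 0 m"
      using WS_zero[of _ a v K n] by (simp add: K_def)
  qed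
  define \<delta> where "\<delta> = (\<Sum>k<K. (N ^^ k) c)"
  have "\<delta> - N \<delta> = (\<Sum>k<K. (N ^^ k) c - (N ^^ Suc k) c)"
    by (simp add: \<delta>_def N_sum sum_subtractf)
  also have "\<dots> = c" using NK by (subst sum_lessThan_telescope') simp
  finally have dN: "\<delta> - N \<delta> = c" .
  have "E * (\<delta> - N \<delta>) = E * \<delta> + fps_shift v (P * \<delta>)"
    by (simp add: N_def algebra_simps mult.assoc[symmetric] Ei)
  also have "\<dots> = fps_shift v (\<delta> * \<eta>)"
    by (simp add: eta distrib_left fps_shift_add mult.assoc[symmetric] mult.commute)
  finally have "fps_shift v (\<delta> * \<eta>) = Rp"
    using dN by (simp add: c_def mult.assoc[symmetric] Ei)
  hence coeff: "\<forall>m. fps_nth (\<delta> * \<eta>) (m + v) = r m"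
    by (metis Rp_def fps_nth_Abs_fps fps_shift_nth)
  have cJ: "\<forall>m. fps_nth c m \<in> J" unfolding c_def
    using ideal_fps_mult[OF J, of Rp] r by (simp add: Rp_def)
  have NJ: "\<forall>m. fps_nth (N F) m \<in> J" if F: "\<forall>m. fps_nth F m \<in> J" for F
  proof -
    have "\<forall>m. fps_nth (fps_shift v (P * F)) m \<in> J"
      using ideal_fps_mult[OF J F] by simp
    then show ?thesis unfolding N_def fps_neg_nth
      using ideal_neg[OF J] ideal_fps_mult[OF J] by blast
  qed
  have NkJ: "\<forall>m. fps_nth ((N ^^ k) c) m \<in> J" for k
    by (induction k) (simp_all add: cJ NJ)
  have "\<forall>m. fps_nth \<delta> m \<in> J"
    unfolding \<delta>_def fps_sum_nth using NkJ by (auto intro: ideal_sum[OF J])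
  with coeff show ?thesis by blast
qed



lemma rh_0: "ring_hom_fun (f :: 'a::comm_ring_1 \<Rightarrow> 'b::comm_ring_1) \<Longrightarrow> f 0 = 0"
  unfolding ring_hom_fun_def by (metis add_cancel_right_right add_0)
lemma rh_add: "ring_hom_fun f \<Longrightarrow> f (x + y) = f x + f y"
  unfolding ring_hom_fun_def by blast
lemma rh_mult: "ring_hom_fun f \<Longrightarrow> f (x * y) = f x * f y"
  unfolding ring_hom_fun_def by blast
lemma rh_1: "ring_hom_fun f \<Longrightarrow> f 1 = 1"
  unfolding ring_hom_fun_def by blast
lemma rh_neg: "ring_hom_fun (f :: 'a::comm_ring_1 \<Rightarrow> 'b::comm_ring_1) \<Longrightarrow> f (- x) = - f x"
  by (metis add.right_inverse eq_neg_iff_add_eq_0 rh_0 rh_add)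
lemma rh_diff: "ring_hom_fun (f :: 'a::comm_ring_1 \<Rightarrow> 'b::comm_ring_1) \<Longrightarrow> f (x - y) = f x - f y"
  by (metis diff_conv_add_uminus rh_add rh_neg)
lemma rh_sum:
  assumes f: "ring_hom_fun (f :: 'a::comm_ring_1 \<Rightarrow> 'b::comm_ring_1)" and fin: "finite A"
  shows "f (sum g A) = (\<Sum>i\<in>A. f (g i))"
  using fin by (induction A rule: finite_induct) (simp_all add: rh_0[OF f] rh_add[OF f])

lemma fps_map_nth: "fps_nth (fps_map h F) n = h (fps_nth F n)"
  by (simp add: fps_map_def)

lemma fps_map_mult:
  assumes f: "ring_hom_fun (f :: 'a::comm_ring_1 \<Rightarrow> 'b::comm_ring_1)"
  shows "fps_map f (F * G) = fps_map f F * fps_map f G"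
  by (rule fps_ext) (simp add: fps_map_nth fps_mult_nth rh_sum[OF f] rh_mult[OF f])

lemma fps_map_add:
  assumes f: "ring_hom_fun (f :: 'a::comm_ring_1 \<Rightarrow> 'b::comm_ring_1)"
  shows "fps_map f (F + G) = fps_map f F + fps_map f G"
  by (rule fps_ext) (simp add: fps_map_nth rh_add[OF f])

lemma fps_map_1:
  assumes f: "ring_hom_fun (f :: 'a::comm_ring_1 \<Rightarrow> 'b::comm_ring_1)"
  shows "fps_map f 1 = 1"
  by (rule fps_ext) (simp add: fps_map_nth rh_1[OF f] rh_0[OF f])

lemma fps_nth_mult0: "fps_nth (F * G) 0 = fps_nth F 0 * fps_nth G 0"
  by (simp add: fps_mult_nth)



lemma part1:
  fixes y :: "'k::field fps"
  assumes Y: "Y_pt d y"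
  shows "\<exists>x. X_pt d x \<and> beta x = y"
proof -
  obtain c where c: "(\<Sum>i\<le>d. c i * fps_nth y i) = 1" using Y unfolding Y_pt_def by blast
  have y0: "y \<noteq> 0" using c by auto
  define v where "v = subdegree y"
  have vd: "v \<le> d"
  proof (rule ccontr)
    assume "\<not> v \<le> d"
    hence "\<forall>i\<le>d. fps_nth y i = 0" unfolding v_def by (auto intro: nth_less_subdegree_zero)
    thus False using c by simp
  qed
  define y' where "y' = fps_shift v y"
  have yy: "y = y' * fps_X ^ v" unfolding y'_def v_def by (simp add: fps_shift_times_fps_X_power)
  have y'0: "fps_nth y' 0 \<noteq> 0" using y0 by (simp add: y'_def v_def)
  define s :: "'k fps" where "s = (if v = d then 1 else 1 + fps_X ^ (d - v))"
  have s0: "fps_nth s 0 = 1" using vd by (simp add: s_def)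
  have sd: "fps_nth s (d - v) = 1" using vd by (simp add: s_def)
  have sn: "fps_nth s m = 0" if "m > d - v" for m using that by (simp add: s_def)
  define q where "q = s * fps_X ^ v"
  have Q: "Qd_pt d q" unfolding Qd_pt_def q_def
    using vd sd sn by (auto simp: fps_X_power_mult_right_nth)
  obtain si where si: "s * si = 1" using fps_unit[of s 1] s0 by auto
  obtain yi where yi: "y' * yi = 1" using fps_unit[of y' "inverse (fps_nth y' 0)"] y'0 by auto
  define u where "u = y' * si"
  have "u * (s * yi) = (y' * yi) * (s * si)" unfolding u_def by (simp add: ac_simps)
  hence U: "LGm_pt u" unfolding LGm_pt_def using si yi by auto
  have "beta (q, u) = y" unfolding beta_def q_def u_def yy
    by (simp add: ac_simps) (metis si mult.assoc mult.commute mult.left_neutral)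
  thus ?thesis using Q U unfolding X_pt_def by auto
qed



lemma part2:
  fixes x :: "'k::field fps \<times> 'k fps" and \<phi>A :: "'k \<Rightarrow> 'a::comm_ring_1"
    and \<phi>B :: "'k \<Rightarrow> 'b::comm_ring_1" and \<pi> :: "'a \<Rightarrow> 'b"
  assumes X: "X_pt d x" and A: "art_local_k_alg \<phi>A" and B: "art_local_k_alg \<phi>B"
    and hom: "k_alg_hom \<phi>A \<phi>B \<pi>" and sur: "surj \<pi>"
  shows "beta_lifts d x \<phi>A \<phi>B \<pi>"
  unfolding beta_lifts_def
proof (intro allI impI)
  fix \<xi>B :: "'b fps \<times> 'b fps" and \<eta> :: "'a fps"
  assume H: "hatX_pt \<phi>B d x \<xi>B \<and> hatY_pt \<phi>A d (beta x) \<eta> \<and> beta \<xi>B = fps_map \<pi> \<eta>"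
  obtain q u where x: "x = (q, u)" by (cases x)
  obtain qB uB where xB: "\<xi>B = (qB, uB)" by (cases \<xi>B)
  have Qq: "Qd_pt d q" and Lu: "LGm_pt u" using X unfolding x X_pt_def by auto
  have QqB: "Qd_pt d qB" and LuB: "LGm_pt uB" and rqB: "reduces_to \<phi>B qB q"
    and ruB: "reduces_to \<phi>B uB u"
    using H unfolding xB x hatX_pt_def X_pt_def by auto
  have r\<eta>: "reduces_to \<phi>A \<eta> (u * q)" using H unfolding x hatY_pt_def beta_def by auto
  have B\<eta>: "uB * qB = fps_map \<pi> \<eta>" using H unfolding xB beta_def by auto
  have locA: "is_local_ring TYPE('a)" and artA: "is_artinian TYPE('a)" and hA: "ring_hom_fun \<phi>A"
    using A unfolding art_local_k_alg_def by auto
  have locB: "is_local_ring TYPE('b)" and hB: "ring_hom_fun \<phi>B"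
    using B unfolding art_local_k_alg_def by auto
  have hp: "ring_hom_fun \<pi>" and hpc: "\<And>c. \<pi> (\<phi>A c) = \<phi>B c"
    using hom unfolding k_alg_hom_def by auto
  have pre: "a \<in> max_ideal" if "\<pi> a \<in> max_ideal" for a
  proof (rule ccontr)
    assume "a \<notin> max_ideal"
    then obtain b where "a * b = 1" using not_in_max_unit[OF locA] by blast
    hence "\<pi> a * \<pi> b = 1" using rh_mult[OF hp] rh_1[OF hp] by metis
    thus False using unit_not_in_max[OF locB] that by blast
  qed
  have ker: "a \<in> max_ideal" if "\<pi> a = 0" for a
    using pre mi_zero[OF locB] that by simp
  have red: "reduces_to \<phi>A F g" if "reduces_to \<phi>B (fps_map \<pi> F) g" for F g
    unfolding reduces_to_def
  proof
    fix n
    have "\<pi> (fps_nth F n - \<phi>A (fps_nth g n)) = fps_nth (fps_map \<pi> F) n - \<phi>B (fps_nth g n)"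
      by (simp add: rh_diff[OF hp] hpc fps_map_nth)
    thus "fps_nth F n - \<phi>A (fps_nth g n) \<in> max_ideal"
      using that pre unfolding reduces_to_def by metis
  qed
  have nonmax: "z \<notin> max_ideal" if "\<pi> z * b = 1" for z b
  proof
    assume z: "z \<in> max_ideal"
    obtain a where a: "\<pi> a = b" using sur by (metis surjD)
    have "\<pi> (1 - z * a) = 0" using that a by (simp add: rh_diff[OF hp] rh_mult[OF hp] rh_1[OF hp])
    hence "1 - z * a \<in> max_ideal" by (rule ker)
    moreover have "z * a \<in> max_ideal" using mi_mult[OF locA z, of a] by (simp add: mult.commute)
    ultimately have "(1 - z * a) + z * a \<in> max_ideal" by (rule mi_add[OF locA])
    thus False using mi_one[OF locA] by simp
  qed
  have q0: "q \<noteq> 0" using Qq unfolding Qd_pt_def by auto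
  define v where "v = subdegree q"
  have vd: "v \<le> d" unfolding v_def using Qq unfolding Qd_pt_def by (auto intro: subdegree_leI)
  have qq: "q = fps_shift v q * fps_X ^ v" unfolding v_def by (simp add: fps_shift_times_fps_X_power)
  have uq: "u * q = (u * fps_shift v q) * fps_X ^ v" by (subst qq) (simp add: mult.assoc)
  obtain ui where ui: "u * ui = 1" using Lu unfolding LGm_pt_def by blast
  have u0: "fps_nth u 0 \<noteq> 0" using arg_cong[OF ui, of "\<lambda>f. fps_nth f 0"] by (auto simp: fps_nth_mult0)
  have uqlow: "fps_nth (u * q) i = 0" if "i < v" for i using that by (subst uq) (simp add: fps_X_power_mult_right_nth)
  have uqv: "fps_nth (u * q) v \<noteq> 0" using u0 q0
    by (subst uq) (simp add: fps_X_power_mult_right_nth fps_nth_mult0 v_def)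
  have \<eta>low: "fps_nth \<eta> i \<in> max_ideal" if "i < v" for i
    using r\<eta> uqlow[OF that] rh_0[OF hA] unfolding reduces_to_def by (metis diff_zero)
  have "\<forall>i<v. \<exists>m. fps_nth \<eta> i ^ m = 0" using \<eta>low max_nilpotent[OF locA artA] by blast
  then obtain nf where nf: "\<forall>i<v. fps_nth \<eta> i ^ nf i = 0" by metis
  define n where "n = (\<Sum>i<v. nf i)"
  have nil: "\<forall>i<v. fps_nth \<eta> i ^ n = 0"
  proof (intro allI impI)
    fix i assume i: "i < v"
    have "nf i \<le> n" unfolding n_def using i by (intro member_le_sum) auto
    hence "fps_nth \<eta> i ^ n = fps_nth \<eta> i ^ nf i * fps_nth \<eta> i ^ (n - nf i)" by (simp add: power_add[symmetric])
    thus "fps_nth \<eta> i ^ n = 0" using nf i by simp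
  qed
  have \<eta>v: "fps_nth \<eta> v \<notin> max_ideal"
  proof
    assume h: "fps_nth \<eta> v \<in> max_ideal"
    define cv where "cv = fps_nth (u * q) v"
    have d1: "fps_nth \<eta> v - \<phi>A cv \<in> max_ideal" using r\<eta> unfolding reduces_to_def cv_def by blast
    have "- (fps_nth \<eta> v - \<phi>A cv) \<in> max_ideal" using mi_mult[OF locA d1, of "-1"] by simp
    hence "fps_nth \<eta> v + - (fps_nth \<eta> v - \<phi>A cv) \<in> max_ideal" by (rule mi_add[OF locA h])
    hence "\<phi>A cv \<in> max_ideal" by simp
    moreover have "\<phi>A cv * \<phi>A (inverse cv) = 1"
      using uqv rh_mult[OF hA, of cv "inverse cv"] rh_1[OF hA] by (simp add: cv_def)
    ultimately show False using unit_not_in_max[OF locA] by blast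
  qed
  then obtain e where e: "fps_nth \<eta> v * e = 1" using not_in_max_unit[OF locA] by blast
  obtain wB where wB: "uB * wB = 1" using LuB unfolding LGm_pt_def by blast
  define w0 where "w0 = Abs_fps (\<lambda>m. SOME a. \<pi> a = fps_nth wB m)"
  have w0: "fps_map \<pi> w0 = wB"
    by (rule fps_ext) (simp add: w0_def fps_map_nth, metis (mono_tags) someI surjD sur)
  define g where "g = w0 * \<eta>"
  have gB: "fps_map \<pi> g = qB"
    unfolding g_def fps_map_mult[OF hp] w0 B\<eta>[symmetric] using wB by (simp add: ac_simps)
  define J where "J = {a. \<pi> a = 0}"
  have J: "is_ideal J" unfolding is_ideal_def J_def
    by (simp add: rh_0[OF hp] rh_add[OF hp] rh_mult[OF hp])
  define r where "r = (\<lambda>m. if m + v \<ge> d then (if m + v = d then 1 else 0) - fps_nth g (m + v) else 0)"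
  have rJ: "\<forall>m. r m \<in> J"
  proof
    fix m
    have "\<pi> (fps_nth g (m + v)) = fps_nth qB (m + v)" using gB by (metis fps_map_nth)
    thus "r m \<in> J" using QqB unfolding J_def r_def Qd_pt_def
      by (auto simp: rh_diff[OF hp] rh_1[OF hp] rh_0[OF hp])
  qed
  obtain \<delta> where \<delta>J: "\<forall>m. fps_nth \<delta> m \<in> J" and \<delta>c: "\<forall>m. fps_nth (\<delta> * \<eta>) (m + v) = r m"
    using weier_div[OF e nil J rJ] by blast
  define w where "w = w0 + \<delta>"
  have \<delta>0: "fps_map \<pi> \<delta> = 0" by (rule fps_ext) (use \<delta>J in \<open>simp add: fps_map_nth J_def\<close>)
  have wm: "fps_map \<pi> w = wB" unfolding w_def fps_map_add[OF hp] \<delta>0 w0 by simp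
  
  have pw0: "\<pi> (fps_nth w 0) = fps_nth wB 0" using wm by (metis fps_map_nth)
  have "\<pi> (fps_nth w 0) * fps_nth uB 0 = 1"
    using arg_cong[OF wB, of "\<lambda>f. fps_nth f 0"] unfolding pw0 by (simp add: fps_nth_mult0 mult.commute)
  hence "fps_nth w 0 \<notin> max_ideal" by (rule nonmax)
  then obtain wi where "fps_nth w 0 * wi = 1" using not_in_max_unit[OF locA] by blast
  then obtain uA where uA: "w * uA = 1" using fps_unit by blast
  define qA where "qA = w * \<eta>"
  have QA: "Qd_pt d qA" unfolding Qd_pt_def
  proof (intro conjI allI impI)
    have gen: "fps_nth qA m = (if m = d then 1 else 0)" if "m \<ge> d" for m
    proof -
      have mv: "m = (m - v) + v" using that vd by simp
      have "fps_nth qA m = fps_nth g m + fps_nth (\<delta> * \<eta>) m"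
        unfolding qA_def w_def g_def by (simp add: distrib_right)
      also have "fps_nth (\<delta> * \<eta>) m = r (m - v)" using \<delta>c mv by metis
      finally show ?thesis using that vd unfolding r_def by auto
    qed
    show "fps_nth qA d = 1" using gen by simp
    fix m assume "m > d" then show "fps_nth qA m = 0" using gen by simp
  qed
  have LA: "LGm_pt uA" unfolding LGm_pt_def using uA by (auto simp: mult.commute)
  have mA: "fps_map \<pi> uA = uB"
  proof -
    have "fps_map \<pi> uA * wB = 1" using arg_cong[OF uA, of "fps_map \<pi>"]
      by (simp add: fps_map_mult[OF hp] fps_map_1[OF hp] wm mult.commute)
    hence "uB * (fps_map \<pi> uA * wB) = uB" by simp
    moreover have "uB * (fps_map \<pi> uA * wB) = fps_map \<pi> uA * (uB * wB)" by (simp add: ac_simps)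
    ultimately show ?thesis using wB by simp
  qed
  have mq: "fps_map \<pi> qA = qB"
    unfolding qA_def fps_map_mult[OF hp] wm B\<eta>[symmetric] using wB by (simp add: ac_simps)
  have bA: "beta (qA, uA) = \<eta>" unfolding beta_def qA_def using uA by (simp add: ac_simps)
  have "hatX_pt \<phi>A d x (qA, uA)" unfolding hatX_pt_def X_pt_def x
    using QA LA red[of qA q] red[of uA u] mq mA rqB ruB by simp
  thus "\<exists>\<xi>A. hatX_pt \<phi>A d x \<xi>A \<and> fps_map \<pi> (fst \<xi>A) = fst \<xi>B \<and> fps_map \<pi> (snd \<xi>A) = snd \<xi>B \<and> beta \<xi>A = \<eta>"
    using mq mA bA unfolding xB by (intro exI[of _ "(qA, uA)"]) simp
qed


theorem proposition3p8:
  fixes d :: nat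
  shows "(\<forall>y :: 'k::field fps. Y_pt d y \<longrightarrow> (\<exists>x. X_pt d x \<and> beta x = y)) \<and>
         (\<forall>(x :: 'k fps \<times> 'k fps) (\<phi>A :: 'k \<Rightarrow> 'a::comm_ring_1) (\<phi>B :: 'k \<Rightarrow> 'b::comm_ring_1) \<pi>.
            X_pt d x \<and> art_local_k_alg \<phi>A \<and> art_local_k_alg \<phi>B \<and> k_alg_hom \<phi>A \<phi>B \<pi> \<and> surj \<pi>
            \<longrightarrow> beta_lifts d x \<phi>A \<phi>B \<pi>)"
  using part1 part2 by blast

end
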